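(* Let $h>0$ and $\mathbb{T}:=\{0,h,2h,3h,\ldots\}$. Let $p_0,p_1\in\mathbb{C}\setminus\{-\tfrac{1}{h}\}$ with $p_0\ne p_1$, and define $p:\mathbb{T}\to\mathbb{C}$ by $p(t)=p_0$ if $\tfrac{t}{h}\equiv 0 \pmod 2$ and $p(t)=p_1$ if $\tfrac{t}{h}\equiv 1\pmod 2$. Consider the equation $$\Delta_h x(t)-p(t)x(t)=0,\qquad t\in\mathbb{T},\qquad (\ast)$$ where $\Delta_h x(t):=\frac{x(t+h)-x(t)}{h}$. Assume $0<|1+hp_0||1+hp_1|\ne 1$. Let $\varepsilon>0$ be fixed and let $\phi:\mathbb{T}\to\mathbb{C}$ satisfy $|\Delta_h\phi(t)-p(t)\phi(t)|\le\varepsilon$ for all $t\in\mathbb{T}$. Let $e_p(t):=\prod_{j=0}^{t/h-1}(1+hp(jh))$ for $t\in\mathbb{T}$ (empty product $=1$, so $e_p(0)=1$). Then: (i) If $|1+hp_0||1+hp_1|>1$, then $\lim_{t\to\infty}\frac{\phi(t)}{e_p(t)}$ exists, and the function $x(t):=\left(\lim_{s\to\infty}\frac{\phi(s)}{e_p(s)}\right)e_p(t)$ is the unique solution of $(\ast)$ with $|\phi(t)-x(t)|\le K_1\varepsilon$ for all $t\in\mathbb{T}$, where $$K_1:=h\max\left\{\frac{1+|1+hp_0|}{-1+|1+hp_0||1+hp_1|},\ \frac{1+|1+hp_1|}{-1+|1+hp_0||1+hp_1|}\right\};$$ moreover $K_1$ is the minimum Ulam stability constant for $(\ast)$. (ii)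 If $0<|1+hp_0||1+hp_1|<1$, then any solution $x$ of $(\ast)$ with $|\phi(0)-x(0)|<\varepsilon h\,\frac{1+|1+hp_1|}{1-|1+hp_0||1+hp_1|}$ satisfies $$|\phi(t)-x(t)|<\varepsilon h\max\left\{\frac{1+|1+hp_0|}{1-|1+hp_0||1+hp_1|},\ \frac{1+|1+hp_1|}{1-|1+hp_0||1+hp_1|}\right\}$$ for all $t\in\mathbb{T}$.
   Context: A constant $K>0$ is an Ulam stability constant for $(\ast)$ on $\mathbb{T}$ if for every $\varepsilon>0$ and every $\phi:\mathbb{T}\to\mathbb{C}$ with $|\Delta_h\phi(t)-p(t)\phi(t)|\le\varepsilon$ for all $t\in\mathbb{T}$, there exists a solution $x:\mathbb{T}\to\mathbb{C}$ of $(\ast)$ with $|\phi(t)-x(t)|\le K\varepsilon$ for all $t\in\mathbb{T}$. The equation has Ulam stability if such a $K$ exists. "Minimum Ulam stability constant" means $K_1$ is an Ulam stability constant and no positive number smaller than $K_1$ is one. *)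

theory Defs
  imports "HOL-Analysis.Analysis"
begin

text \<open>The time scale T = {0, h, 2h, ...} is parametrised by n :: nat, i.e. a function
  x : T -> C is represented as x :: nat => complex with x n standing for x(n h).\<close>

definition delta_h :: "real \<Rightarrow> (nat \<Rightarrow> complex) \<Rightarrow> nat \<Rightarrow> complex" where
  "delta_h h x n = (x (Suc n) - x n) / complex_of_real h"

definition pfun :: "complex \<Rightarrow> complex \<Rightarrow> nat \<Rightarrow> complex" where
  "pfun p0 p1 n = (if even n then p0 else p1)"

definition e_p :: "real \<Rightarrow> (nat \<Rightarrow> complex) \<Rightarrow> nat \<Rightarrow> complex" where
  "e_p h p n = (\<Prod>j<n. 1 + complex_of_real h * p j)"

definition is_solution :: "real \<Rightarrow> (nat \<Rightarrow> complex) \<Rightarrow> (nat \<Rightarrow> complex) \<Rightarrow> bool" where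
  "is_solution h p x \<longleftrightarrow> (\<forall>n. delta_h h x n - p n * x n = 0)"

definition ulam_constant :: "real \<Rightarrow> (nat \<Rightarrow> complex) \<Rightarrow> real \<Rightarrow> bool" where
  "ulam_constant h p K \<longleftrightarrow> K > 0 \<and>
     (\<forall>\<epsilon>>0. \<forall>\<phi>. (\<forall>n. cmod (delta_h h \<phi> n - p n * \<phi> n) \<le> \<epsilon>) \<longrightarrow>
        (\<exists>x. is_solution h p x \<and> (\<forall>n. cmod (\<phi> n - x n) \<le> K * \<epsilon>)))"

definition min_ulam_constant :: "real \<Rightarrow> (nat \<Rightarrow> complex) \<Rightarrow> real \<Rightarrow> bool" where
  "min_ulam_constant h p K \<longleftrightarrow> ulam_constant h p K \<and>
     (\<forall>K'. 0 < K' \<and> K' < K \<longrightarrow> \<not> ulam_constant h p K')"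

end

theory Submission
  imports Defs
begin


definition cf :: "real \<Rightarrow> complex \<Rightarrow> complex \<Rightarrow> nat \<Rightarrow> complex" where
  "cf h p0 p1 n = (if even n then 1 + complex_of_real h * p0 else 1 + complex_of_real h * p1)"

lemma c_eq: "1 + complex_of_real h * pfun p0 p1 n = cf h p0 p1 n"
  by (simp add: pfun_def cf_def)

lemma E_0: "e_p h p 0 = 1" by (simp add: e_p_def)

lemma E_Suc: "e_p h (pfun p0 p1) (Suc n) = e_p h (pfun p0 p1) n * cf h p0 p1 n"
  by (simp add: e_p_def c_eq)

lemma E_even: "e_p h (pfun p0 p1) (2*m) = ((1 + complex_of_real h*p0)*(1 + complex_of_real h*p1))^m"
proof (induction m)
  case 0 then show ?case by (simp add: E_0)
next
  case (Suc m)
  have "2 * Suc m = Suc (Suc (2*m))" by simp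
  then show ?case using Suc by (simp only: E_Suc) (simp add: cf_def)
qed

lemma E_odd: "e_p h (pfun p0 p1) (2*m+1) = ((1 + complex_of_real h*p0)*(1 + complex_of_real h*p1))^m * (1 + complex_of_real h*p0)"
  using E_even[of h p0 p1 m] by (simp add: E_Suc cf_def)

lemma cf_norm: "cmod (cf h p0 p1 n) = (if even n then cmod (1 + complex_of_real h * p0) else cmod (1 + complex_of_real h * p1))"
  by (simp add: cf_def)

lemma psi_eq:
  assumes "h > 0"
  shows "delta_h h \<phi> n - pfun p0 p1 n * \<phi> n = (\<phi> (Suc n) - cf h p0 p1 n * \<phi> n) / complex_of_real h"
proof -
  have "complex_of_real h \<noteq> 0" using assms by simp
  then show ?thesis unfolding delta_h_def c_eq[symmetric] by (simp add: field_simps)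
qed

lemma psi_bound:
  assumes "h > 0" "cmod (delta_h h \<phi> n - pfun p0 p1 n * \<phi> n) \<le> \<epsilon>"
  shows "cmod (\<phi> (Suc n) - cf h p0 p1 n * \<phi> n) \<le> h * \<epsilon>"
proof -
  have "cmod (delta_h h \<phi> n - pfun p0 p1 n * \<phi> n) = cmod (\<phi> (Suc n) - cf h p0 p1 n * \<phi> n) / h"
    using assms(1) by (simp add: psi_eq norm_divide)
  then have "cmod (\<phi> (Suc n) - cf h p0 p1 n * \<phi> n) = h * cmod (delta_h h \<phi> n - pfun p0 p1 n * \<phi> n)"
    using assms(1) by (simp add: field_simps)
  then show ?thesis using assms by (simp add: mult_left_mono)
qed

lemma sol_step:
  assumes "h > 0" "is_solution h (pfun p0 p1) x"
  shows "x (Suc n) = cf h p0 p1 n * x n"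
proof -
  have "delta_h h x n - pfun p0 p1 n * x n = 0" using assms(2) by (simp add: is_solution_def)
  then have "(x (Suc n) - cf h p0 p1 n * x n) / complex_of_real h = 0" using psi_eq[OF assms(1)] by simp
  then show ?thesis using assms(1) by simp
qed

lemma sol_form:
  assumes "h > 0" "is_solution h (pfun p0 p1) x"
  shows "x n = x 0 * e_p h (pfun p0 p1) n"
  by (induction n) (simp_all add: E_0 E_Suc sol_step[OF assms])

lemma sol_L:
  assumes "h > 0"
  shows "is_solution h (pfun p0 p1) (\<lambda>n. L * e_p h (pfun p0 p1) n)"
  unfolding is_solution_def
proof
  fix n
  show "delta_h h (\<lambda>n. L * e_p h (pfun p0 p1) n) n - pfun p0 p1 n * (L * e_p h (pfun p0 p1) n) = 0"
    by (subst psi_eq[OF assms]) (simp add: E_Suc)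
qed

lemma sol_bounded_zero:
  assumes "h > 0" "is_solution h (pfun p0 p1) x" "\<forall>n. cmod (x n) \<le> M"
    and P: "cmod (1 + complex_of_real h * p0) * cmod (1 + complex_of_real h * p1) > 1"
  shows "x 0 = 0"
proof (rule ccontr)
  assume nz: "x 0 \<noteq> 0"
  let ?P = "cmod (1 + complex_of_real h * p0) * cmod (1 + complex_of_real h * p1)"
  obtain m where m: "M / cmod (x 0) < ?P ^ m" using real_arch_pow[OF P] by blast
  have "cmod (x (2*m)) = cmod (x 0) * ?P ^ m"
    using sol_form[OF assms(1,2), of "2*m"] by (simp add: E_even norm_mult norm_power power_mult_distrib)
  with assms(3) have "cmod (x 0) * ?P ^ m \<le> M" by metis
  with m nz show False by (simp add: field_simps)
qed



definition Sf :: "real \<Rightarrow> complex \<Rightarrow> complex \<Rightarrow> nat \<Rightarrow> real" where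
  "Sf h p0 p1 n = (let A = cmod (1 + complex_of_real h * p0); B = cmod (1 + complex_of_real h * p1) in
     if even n then (1 + B) / (A * B - 1) else (1 + A) / (A * B - 1))"

context
  fixes h :: real and p0 p1 :: complex
  assumes hpos: "h > 0" and Apos: "0 < cmod (1 + complex_of_real h * p0)"
    and Bpos: "0 < cmod (1 + complex_of_real h * p1)"
begin

lemma cf_pos: "cmod (cf h p0 p1 n) > 0"
  using Apos Bpos by (simp add: cf_norm)

lemma E_pos: "cmod (e_p h (pfun p0 p1) n) > 0"
proof (induction n)
  case 0 then show ?case by (simp add: E_0)
next
  case (Suc n) then show ?case using cf_pos[of n] by (simp add: E_Suc norm_mult)
qed

lemma E_norm_Suc: "cmod (e_p h (pfun p0 p1) (Suc n)) = cmod (e_p h (pfun p0 p1) n) * cmod (cf h p0 p1 n)"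
  by (simp add: E_Suc norm_mult)

context
  assumes P: "cmod (1 + complex_of_real h * p0) * cmod (1 + complex_of_real h * p1) > 1"
begin

lemma S_pos: "Sf h p0 p1 n > 0"
  using P Apos Bpos by (auto simp add: Sf_def Let_def intro!: divide_pos_pos add_pos_nonneg)

lemma S_step: "Sf h p0 p1 (Suc n) / cmod (cf h p0 p1 n) - Sf h p0 p1 n = - 1 / cmod (cf h p0 p1 n)"
proof -
  define A where "A = cmod (1 + complex_of_real h * p0)"
  define B where "B = cmod (1 + complex_of_real h * p1)"
  have A: "A > 0" and B: "B > 0" and AB: "A * B - 1 > 0" using Apos Bpos P by (auto simp: A_def B_def)
  show ?thesis
  proof (cases "even n")
    case True
    then have "Sf h p0 p1 (Suc n) / cmod (cf h p0 p1 n) - Sf h p0 p1 n = (1 + A) / (A * B - 1) / A - (1 + B) / (A * B - 1)"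
      and "cmod (cf h p0 p1 n) = A"
      by (simp_all add: Sf_def Let_def cf_norm A_def B_def)
    moreover have "(1 + A) / (A * B - 1) / A - (1 + B) / (A * B - 1) = -1 / A"
    proof -
      have "(1 + A) / (A * B - 1) / A - (1 + B) / (A * B - 1) = ((1 + A) - A * (1 + B)) / (A * (A * B - 1))"
        using A AB by (simp add: diff_divide_distrib)
      also have "(1 + A) - A * (1 + B) = - (A * B - 1)" by (simp add: algebra_simps)
      finally have "(1 + A) / (A * B - 1) / A - (1 + B) / (A * B - 1) = - (A * B - 1) / (A * (A * B - 1))"
        by (metis minus_divide_left)
      also have "\<dots> = -1 / A" using A AB by (simp add: field_simps)
      finally show ?thesis .
    qed
    ultimately show ?thesis by simp
  next
    case False
    then have "Sf h p0 p1 (Suc n) / cmod (cf h p0 p1 n) - Sf h p0 p1 n = (1 + B) / (A * B - 1) / B - (1 + A) / (A * B - 1)"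
      and "cmod (cf h p0 p1 n) = B"
      by (simp_all add: Sf_def Let_def cf_norm A_def B_def)
    moreover have "(1 + B) / (A * B - 1) / B - (1 + A) / (A * B - 1) = -1 / B"
    proof -
      have "(1 + B) / (A * B - 1) / B - (1 + A) / (A * B - 1) = ((1 + B) - B * (1 + A)) / (B * (A * B - 1))"
        using B AB by (simp add: diff_divide_distrib)
      also have "(1 + B) - B * (1 + A) = - (A * B - 1)" by (simp add: algebra_simps)
      finally have "(1 + B) / (A * B - 1) / B - (1 + A) / (A * B - 1) = - (A * B - 1) / (B * (A * B - 1))"
        by (metis minus_divide_left)
      also have "\<dots> = -1 / B" using B AB by (simp add: field_simps)
      finally show ?thesis .
    qed
    ultimately show ?thesis by simp
  qed
qed

definition "Rf n = Sf h p0 p1 n / cmod (e_p h (pfun p0 p1) n)"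

lemma R_step: "Rf n - Rf (Suc n) = 1 / cmod (e_p h (pfun p0 p1) (Suc n))"
proof -
  have e: "cmod (e_p h (pfun p0 p1) n) > 0" by (rule E_pos)
  have c: "cmod (cf h p0 p1 n) > 0" by (rule cf_pos)
  have "Rf n - Rf (Suc n) = - (Sf h p0 p1 (Suc n) / cmod (cf h p0 p1 n) - Sf h p0 p1 n) / cmod (e_p h (pfun p0 p1) n)"
    unfolding Rf_def E_norm_Suc using e c by (simp add: field_simps)
  also have "\<dots> = 1 / cmod (e_p h (pfun p0 p1) (Suc n))"
    unfolding S_step E_norm_Suc using e c by simp
  finally show ?thesis .
qed

lemma R_pos: "Rf n > 0" unfolding Rf_def using S_pos E_pos by simp

lemma part1_core:
  fixes \<phi> :: "nat \<Rightarrow> complex" and \<delta> :: real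
  assumes d0: "\<delta> \<ge> 0" and psi: "\<And>n. cmod (\<phi> (Suc n) - cf h p0 p1 n * \<phi> n) \<le> \<delta>"
  shows "\<exists>L. (\<lambda>n. \<phi> n / e_p h (pfun p0 p1) n) \<longlonglongrightarrow> L \<and>
             (\<forall>n. cmod (\<phi> n - L * e_p h (pfun p0 p1) n) \<le> \<delta> * Sf h p0 p1 n)"
proof -
  define E where "E = e_p h (pfun p0 p1)"
  define u where "u n = \<phi> n / E n" for n
  have Enz: "E n \<noteq> 0" for n using E_pos[of n] by (auto simp: E_def)
  have ustep: "cmod (u (Suc n) - u n) \<le> \<delta> * (Rf n - Rf (Suc n))" for n
  proof -
    have c0: "cf h p0 p1 n \<noteq> 0" using cf_pos[of n] by auto
    have "\<phi> n / E n = cf h p0 p1 n * \<phi> n / (E n * cf h p0 p1 n)" using c0 by simp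
    then have "u (Suc n) - u n = (\<phi> (Suc n) - cf h p0 p1 n * \<phi> n) / (E n * cf h p0 p1 n)"
      unfolding u_def E_Suc E_def by (simp add: diff_divide_distrib)
    then have "u (Suc n) - u n = (\<phi> (Suc n) - cf h p0 p1 n * \<phi> n) / E (Suc n)"
      unfolding E_def E_Suc by simp
    then have "cmod (u (Suc n) - u n) = cmod (\<phi> (Suc n) - cf h p0 p1 n * \<phi> n) / cmod (E (Suc n))"
      by (simp add: norm_divide)
    also have "\<dots> \<le> \<delta> / cmod (E (Suc n))"
      using psi[of n] E_pos[of "Suc n"] unfolding E_def by (simp add: divide_right_mono)
    also have "\<dots> = \<delta> * (Rf n - Rf (Suc n))" unfolding R_step E_def by simp
    finally show ?thesis .
  qed
  have umono: "cmod (u m - u n) \<le> \<delta> * (Rf n - Rf m)" if "n \<le> m" for m n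
    using that
  proof (induction m rule: dec_induct)
    case base then show ?case by simp
  next
    case (step m)
    have "cmod (u (Suc m) - u n) \<le> cmod (u (Suc m) - u m) + cmod (u m - u n)"
      using norm_triangle_ineq[of "u (Suc m) - u m" "u m - u n"] by simp
    also have "\<dots> \<le> \<delta> * (Rf m - Rf (Suc m)) + \<delta> * (Rf n - Rf m)"
      using ustep[of m] step.IH by simp
    finally show ?case by (simp add: algebra_simps)
  qed
  have Rdec: "decseq Rf"
    unfolding decseq_Suc_iff using R_step E_pos by (smt (verit) divide_pos_pos)
  have R0: "\<forall>i. 0 \<le> Rf i" using R_pos less_imp_le by blast
  obtain l where Rl: "Rf \<longlonglongrightarrow> l" and "\<forall>i. l \<le> Rf i"
    using decseq_convergent[OF Rdec R0] by blast
  have RC: "Cauchy Rf" using Rl by (rule LIMSEQ_imp_Cauchy)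
  have "Cauchy u"
  proof (rule metric_CauchyI)
    fix e :: real assume e: "e > 0"
    then have "e / (\<delta> + 1) > 0" using d0 by simp
    from metric_CauchyD[OF RC this] obtain M where M: "\<forall>m\<ge>M. \<forall>n\<ge>M. dist (Rf m) (Rf n) < e / (\<delta> + 1)" by blast
    have "dist (u m) (u n) < e" if "m \<ge> M" "n \<ge> M" for m n
    proof -
      have dR: "\<bar>Rf m - Rf n\<bar> < e / (\<delta> + 1)" using M that by (simp add: dist_real_def)
      have "dist (u m) (u n) \<le> \<delta> * \<bar>Rf m - Rf n\<bar>"
      proof (cases "n \<le> m")
        case True then show ?thesis using umono[OF True] d0 unfolding dist_norm
          by (smt (verit) mult_left_mono)
      next
        case False then have "m \<le> n" by simp
        from umono[OF this] show ?thesis using d0 unfolding dist_norm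
          by (smt (verit) mult_left_mono norm_minus_commute)
      qed
      also have "\<dots> \<le> \<delta> * (e / (\<delta> + 1))" using mult_left_mono[OF less_imp_le[OF dR] d0] by simp
      also have "\<dots> < e" using d0 e by (simp add: field_simps)
      finally show ?thesis .
    qed
    then show "\<exists>M. \<forall>m\<ge>M. \<forall>n\<ge>M. dist (u m) (u n) < e" by blast
  qed
  then obtain L where uL: "u \<longlonglongrightarrow> L" using Cauchy_convergent_iff convergent_def by blast
  have bnd: "cmod (L - u n) \<le> \<delta> * Rf n" for n
  proof -
    have "(\<lambda>m. cmod (u m - u n)) \<longlonglongrightarrow> cmod (L - u n)"
      by (intro tendsto_intros uL)
    moreover have "\<forall>m\<ge>n. cmod (u m - u n) \<le> \<delta> * Rf n"
      using umono R_pos d0 by (smt (verit) mult_left_mono)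
    ultimately show ?thesis using LIMSEQ_le_const2 by blast
  qed
  have "cmod (\<phi> n - L * E n) \<le> \<delta> * Sf h p0 p1 n" for n
  proof -
    have "\<phi> n - L * E n = (u n - L) * E n" using Enz[of n] by (simp add: u_def field_simps)
    then have "cmod (\<phi> n - L * E n) = cmod (L - u n) * cmod (E n)"
      by (simp add: norm_mult norm_minus_commute)
    also have "\<dots> \<le> \<delta> * Rf n * cmod (E n)" using bnd[of n] by (simp add: mult_right_mono)
    also have "\<dots> = \<delta> * Sf h p0 p1 n" unfolding Rf_def E_def using E_pos[of n] by simp
    finally show ?thesis .
  qed
  then show ?thesis using uL unfolding u_def E_def by blast
qed

end
end


context
  fixes h :: real and p0 p1 :: complex
  assumes hpos: "h > 0" and Apos: "0 < cmod (1 + complex_of_real h * p0)"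
    and Bpos: "0 < cmod (1 + complex_of_real h * p1)"
begin

lemma part2_core:
  fixes \<phi> x :: "nat \<Rightarrow> complex" and \<delta> :: real
  assumes P: "cmod (1 + complex_of_real h * p0) * cmod (1 + complex_of_real h * p1) < 1"
    and psi: "\<And>n. cmod (\<phi> (Suc n) - cf h p0 p1 n * \<phi> n) \<le> \<delta>"
    and sol: "is_solution h (pfun p0 p1) x"
    and init: "cmod (\<phi> 0 - x 0) < \<delta> * ((1 + cmod (1 + complex_of_real h * p1)) /
                  (1 - cmod (1 + complex_of_real h * p0) * cmod (1 + complex_of_real h * p1)))"
  shows "cmod (\<phi> n - x n) < (if even n then \<delta> * ((1 + cmod (1 + complex_of_real h * p1)) /
                  (1 - cmod (1 + complex_of_real h * p0) * cmod (1 + complex_of_real h * p1)))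
              else \<delta> * ((1 + cmod (1 + complex_of_real h * p0)) /
                  (1 - cmod (1 + complex_of_real h * p0) * cmod (1 + complex_of_real h * p1))))"
proof (induction n)
  case 0 then show ?case using init by simp
next
  case (Suc n)
  define A where "A = cmod (1 + complex_of_real h * p0)"
  define B where "B = cmod (1 + complex_of_real h * p1)"
  have A: "A > 0" and B: "B > 0" and AB: "1 - A * B > 0" using Apos Bpos P by (auto simp: A_def B_def)
  have "\<phi> (Suc n) - x (Suc n) = (\<phi> (Suc n) - cf h p0 p1 n * \<phi> n) + cf h p0 p1 n * (\<phi> n - x n)"
    using sol_step[OF hpos sol, of n] by (simp add: algebra_simps)
  then have "cmod (\<phi> (Suc n) - x (Suc n)) \<le> cmod (\<phi> (Suc n) - cf h p0 p1 n * \<phi> n) + cmod (cf h p0 p1 n) * cmod (\<phi> n - x n)"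
    by (metis norm_mult norm_triangle_ineq)
  also have "\<dots> \<le> \<delta> + cmod (cf h p0 p1 n) * cmod (\<phi> n - x n)" using psi[of n] by simp
  finally have st: "cmod (\<phi> (Suc n) - x (Suc n)) \<le> \<delta> + cmod (cf h p0 p1 n) * cmod (\<phi> n - x n)" .
  show ?case
  proof (cases "even n")
    case True
    then have c: "cmod (cf h p0 p1 n) = A" by (simp add: cf_norm A_def)
    have IH: "cmod (\<phi> n - x n) < \<delta> * ((1 + B) / (1 - A * B))" using Suc.IH True by (simp add: A_def B_def)
    have "\<delta> + A * cmod (\<phi> n - x n) < \<delta> + A * (\<delta> * ((1 + B) / (1 - A * B)))"
      using mult_strict_left_mono[OF IH A] by simp
    also have "\<dots> = \<delta> * ((1 + A) / (1 - A * B))" using AB by (simp add: field_simps)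
    finally show ?thesis using st c True by (simp add: A_def B_def)
  next
    case False
    then have c: "cmod (cf h p0 p1 n) = B" by (simp add: cf_norm B_def)
    have IH: "cmod (\<phi> n - x n) < \<delta> * ((1 + A) / (1 - A * B))" using Suc.IH False by (simp add: A_def B_def)
    have "\<delta> + B * cmod (\<phi> n - x n) < \<delta> + B * (\<delta> * ((1 + A) / (1 - A * B)))"
      using mult_strict_left_mono[OF IH B] by simp
    also have "\<dots> = \<delta> * ((1 + B) / (1 - A * B))" using AB by (simp add: field_simps)
    finally show ?thesis using st c False by (simp add: A_def B_def)
  qed
qed

context
  assumes P: "cmod (1 + complex_of_real h * p0) * cmod (1 + complex_of_real h * p1) > 1"
begin

definition "phis n = complex_of_real (h * Sf h p0 p1 n) * e_p h (pfun p0 p1) n / complex_of_real (cmod (e_p h (pfun p0 p1) n))"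

lemma phis_norm: "cmod (phis n) = h * Sf h p0 p1 n"
  unfolding phis_def using E_pos[OF hpos Apos Bpos, of n] S_pos[OF hpos Apos Bpos P, of n] hpos
  by (simp add: norm_mult norm_divide)

lemma phis_psi: "cmod (delta_h h phis n - pfun p0 p1 n * phis n) \<le> 1"
proof -
  define e where "e = e_p h (pfun p0 p1) n"
  define c where "c = cf h p0 p1 n"
  define s0 where "s0 = Sf h p0 p1 n"
  define s1 where "s1 = Sf h p0 p1 (Suc n)"
  have ne: "cmod e > 0" using E_pos[OF hpos Apos Bpos, of n] by (simp add: e_def)
  have nc: "cmod c > 0" using cf_pos[OF hpos Apos Bpos, of n] by (simp add: c_def)
  have ne': "complex_of_real (cmod e) \<noteq> 0" and nc': "complex_of_real (cmod c) \<noteq> 0" using ne nc by auto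
  have "phis (Suc n) - c * phis n
      = complex_of_real (h * s1) * (e * c) / complex_of_real (cmod e * cmod c) - c * (complex_of_real (h * s0) * e / complex_of_real (cmod e))"
    unfolding phis_def E_Suc e_def c_def s0_def s1_def norm_mult ..
  also have "\<dots> = complex_of_real h * e * c / complex_of_real (cmod e) * complex_of_real (s1 / cmod c - s0)"
    using ne' nc' by (simp add: field_simps)
  also have "s1 / cmod c - s0 = - 1 / cmod c" unfolding s1_def s0_def c_def by (rule S_step[OF hpos Apos Bpos P])
  finally have "cmod (phis (Suc n) - c * phis n) = h * cmod e * cmod c / cmod e * (1 / cmod c)"
    using hpos by (simp add: norm_mult norm_divide)
  also have "\<dots> = h" using ne nc by simp
  finally have "cmod (phis (Suc n) - c * phis n) = h" .
  then show ?thesis using hpos unfolding psi_eq[OF hpos] c_def by (simp add: norm_divide)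
qed

lemma K1_pos: "h * max (Sf h p0 p1 1) (Sf h p0 p1 0) > 0"
  using S_pos[OF hpos Apos Bpos P] hpos by (simp add: less_max_iff_disj)

lemma not_ulam:
  assumes K: "0 < K'" "K' < h * max (Sf h p0 p1 1) (Sf h p0 p1 0)"
  shows "\<not> ulam_constant h (pfun p0 p1) K'"
proof
  assume "ulam_constant h (pfun p0 p1) K'"
  then obtain x where sol: "is_solution h (pfun p0 p1) x" and xb: "\<forall>n. cmod (phis n - x n) \<le> K' * 1"
  proof -
    have "\<forall>\<epsilon>>0. \<forall>\<phi>. (\<forall>n. cmod (delta_h h \<phi> n - pfun p0 p1 n * \<phi> n) \<le> \<epsilon>) \<longrightarrow>
        (\<exists>x. is_solution h (pfun p0 p1) x \<and> (\<forall>n. cmod (\<phi> n - x n) \<le> K' * \<epsilon>))"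
      using \<open>ulam_constant h (pfun p0 p1) K'\<close> unfolding ulam_constant_def by blast
    then have "\<exists>x. is_solution h (pfun p0 p1) x \<and> (\<forall>n. cmod (phis n - x n) \<le> K' * 1)"
      using phis_psi zero_less_one by blast
    then show ?thesis using that by blast
  qed
  have Sb: "Sf h p0 p1 n \<le> Sf h p0 p1 0 + Sf h p0 p1 1" for n
    using S_pos[OF hpos Apos Bpos P, of 0] S_pos[OF hpos Apos Bpos P, of 1]
    by (cases "even n") (simp_all add: Sf_def Let_def)
  have "cmod (x n) \<le> K' + h * (Sf h p0 p1 0 + Sf h p0 p1 1)" for n
  proof -
    have "cmod (x n) \<le> cmod (phis n - x n) + cmod (phis n)"
      using norm_triangle_ineq[of "x n - phis n" "phis n"] by (simp add: norm_minus_commute)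
    also have "\<dots> \<le> K' + h * (Sf h p0 p1 0 + Sf h p0 p1 1)"
    proof -
      have "h * Sf h p0 p1 n \<le> h * (Sf h p0 p1 0 + Sf h p0 p1 1)"
        using mult_left_mono[OF Sb[of n], of h] hpos by linarith
      then show ?thesis using xb[rule_format, of n] phis_norm[of n] by linarith
    qed
    finally show ?thesis .
  qed
  then have x0: "x 0 = 0" using sol_bounded_zero[OF hpos sol _ P] by blast
  have xz: "x n = 0" for n using sol_form[OF hpos sol, of n] x0 by simp
  have "h * Sf h p0 p1 0 \<le> K'" "h * Sf h p0 p1 1 \<le> K'"
    using xb[rule_format, of 0] xb[rule_format, of 1] phis_norm[of 0] phis_norm[of 1] xz by simp_all
  then show False using K by (simp add: max_def split: if_splits)
qed

lemma is_ulam: "ulam_constant h (pfun p0 p1) (h * max (Sf h p0 p1 1) (Sf h p0 p1 0))"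
  unfolding ulam_constant_def
proof (intro conjI allI impI K1_pos)
  fix \<epsilon> :: real and \<phi> :: "nat \<Rightarrow> complex"
  assume e: "\<epsilon> > 0" and ph: "\<forall>n. cmod (delta_h h \<phi> n - pfun p0 p1 n * \<phi> n) \<le> \<epsilon>"
  have psi: "cmod (\<phi> (Suc n) - cf h p0 p1 n * \<phi> n) \<le> h * \<epsilon>" for n
    using psi_bound[OF hpos] ph by blast
  obtain L where L: "\<forall>n. cmod (\<phi> n - L * e_p h (pfun p0 p1) n) \<le> h * \<epsilon> * Sf h p0 p1 n"
    using part1_core[OF hpos Apos Bpos P, of "h * \<epsilon>" \<phi>] psi e hpos by auto
  have "cmod (\<phi> n - L * e_p h (pfun p0 p1) n) \<le> h * max (Sf h p0 p1 1) (Sf h p0 p1 0) * \<epsilon>" for n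
  proof -
    have "Sf h p0 p1 n \<le> max (Sf h p0 p1 1) (Sf h p0 p1 0)"
      by (cases "even n") (simp_all add: Sf_def Let_def)
    then have "h * \<epsilon> * Sf h p0 p1 n \<le> h * \<epsilon> * max (Sf h p0 p1 1) (Sf h p0 p1 0)"
      using hpos e by (simp add: mult_left_mono)
    then show ?thesis using L[rule_format, of n] by (simp add: algebra_simps)
  qed
  then show "\<exists>x. is_solution h (pfun p0 p1) x \<and> (\<forall>n. cmod (\<phi> n - x n) \<le> h * max (Sf h p0 p1 1) (Sf h p0 p1 0) * \<epsilon>)"
    using sol_L[OF hpos] by blast
qed

end
end

theorem theorem2p2:
  fixes h \<epsilon> :: real and p0 p1 :: complex and \<phi> :: "nat \<Rightarrow> complex"
  assumes hpos: "h > 0"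
    and p0: "p0 \<noteq> - 1 / complex_of_real h" and p1: "p1 \<noteq> - 1 / complex_of_real h"
    and p01: "p0 \<noteq> p1"
    and prod_pos: "0 < cmod (1 + h * p0) * cmod (1 + h * p1)"
    and prod_ne1: "cmod (1 + h * p0) * cmod (1 + h * p1) \<noteq> 1"
    and eps: "\<epsilon> > 0"
    and phi: "\<forall>n. cmod (delta_h h \<phi> n - pfun p0 p1 n * \<phi> n) \<le> \<epsilon>"
  shows
    "(cmod (1 + h * p0) * cmod (1 + h * p1) > 1 \<longrightarrow>
       (let K1 = h * max ((1 + cmod (1 + h * p0)) / (-1 + cmod (1 + h * p0) * cmod (1 + h * p1)))
                         ((1 + cmod (1 + h * p1)) / (-1 + cmod (1 + h * p0) * cmod (1 + h * p1)))
        in (\<exists>L. (\<lambda>n. \<phi> n / e_p h (pfun p0 p1) n) \<longlonglongrightarrow> L \<and>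
              is_solution h (pfun p0 p1) (\<lambda>n. L * e_p h (pfun p0 p1) n) \<and>
              (\<forall>n. cmod (\<phi> n - L * e_p h (pfun p0 p1) n) \<le> K1 * \<epsilon>) \<and>
              (\<forall>y. is_solution h (pfun p0 p1) y \<and> (\<forall>n. cmod (\<phi> n - y n) \<le> K1 * \<epsilon>)
                     \<longrightarrow> y = (\<lambda>n. L * e_p h (pfun p0 p1) n))) \<and>
           min_ulam_constant h (pfun p0 p1) K1))
   \<and>
    (cmod (1 + h * p0) * cmod (1 + h * p1) < 1 \<longrightarrow>
       (\<forall>x. is_solution h (pfun p0 p1) x \<and>
            cmod (\<phi> 0 - x 0) < \<epsilon> * h * ((1 + cmod (1 + h * p1)) / (1 - cmod (1 + h * p0) * cmod (1 + h * p1)))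
         \<longrightarrow> (\<forall>n. cmod (\<phi> n - x n) < \<epsilon> * h *
                 max ((1 + cmod (1 + h * p0)) / (1 - cmod (1 + h * p0) * cmod (1 + h * p1)))
                     ((1 + cmod (1 + h * p1)) / (1 - cmod (1 + h * p0) * cmod (1 + h * p1))))))"
proof -
  define A where "A = cmod (1 + complex_of_real h * p0)"
  define B where "B = cmod (1 + complex_of_real h * p1)"
  have A0: "A \<ge> 0" and B0: "B \<ge> 0" by (simp_all add: A_def B_def)
  have AB: "A * B > 0" using prod_pos by (simp add: A_def B_def)
  have Apos: "0 < cmod (1 + complex_of_real h * p0)"
    using AB A0 B0 unfolding A_def[symmetric] by (metis less_eq_real_def mult_zero_left)
  have Bpos: "0 < cmod (1 + complex_of_real h * p1)"
    using AB A0 B0 unfolding B_def[symmetric] by (metis less_eq_real_def mult_zero_right)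
  have psi: "cmod (\<phi> (Suc n) - cf h p0 p1 n * \<phi> n) \<le> h * \<epsilon>" for n
    using psi_bound[OF hpos] phi by blast
  show ?thesis
  proof (intro conjI impI)
    assume P: "cmod (1 + complex_of_real h * p0) * cmod (1 + complex_of_real h * p1) > 1"
    have Sf1: "(1 + cmod (1 + complex_of_real h * p0)) / (-1 + cmod (1 + complex_of_real h * p0) * cmod (1 + complex_of_real h * p1)) = Sf h p0 p1 1"
      by (simp add: Sf_def Let_def algebra_simps)
    have Sf0: "(1 + cmod (1 + complex_of_real h * p1)) / (-1 + cmod (1 + complex_of_real h * p0) * cmod (1 + complex_of_real h * p1)) = Sf h p0 p1 0"
      by (simp add: Sf_def Let_def algebra_simps)
    define K1 where "K1 = h * max (Sf h p0 p1 1) (Sf h p0 p1 0)"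
    obtain L where uL: "(\<lambda>n. \<phi> n / e_p h (pfun p0 p1) n) \<longlonglongrightarrow> L"
      and L: "\<forall>n. cmod (\<phi> n - L * e_p h (pfun p0 p1) n) \<le> h * \<epsilon> * Sf h p0 p1 n"
      using part1_core[OF hpos Apos Bpos P, of "h * \<epsilon>" \<phi>] psi eps hpos by auto
    have Lb: "cmod (\<phi> n - L * e_p h (pfun p0 p1) n) \<le> K1 * \<epsilon>" for n
    proof -
      have "Sf h p0 p1 n \<le> max (Sf h p0 p1 1) (Sf h p0 p1 0)"
        by (cases "even n") (simp_all add: Sf_def Let_def)
      then have "h * \<epsilon> * Sf h p0 p1 n \<le> h * \<epsilon> * max (Sf h p0 p1 1) (Sf h p0 p1 0)"
        using hpos eps by (simp add: mult_left_mono)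
      then show ?thesis using L[rule_format, of n] unfolding K1_def by (simp add: algebra_simps)
    qed
    have uniq: "y = (\<lambda>n. L * e_p h (pfun p0 p1) n)"
      if ys: "is_solution h (pfun p0 p1) y" and yb: "\<forall>n. cmod (\<phi> n - y n) \<le> K1 * \<epsilon>" for y
    proof -
      define z where "z n = (y 0 - L) * e_p h (pfun p0 p1) n" for n
      have zs: "is_solution h (pfun p0 p1) z" unfolding z_def by (rule sol_L[OF hpos])
      have "cmod (z n) \<le> K1 * \<epsilon> + K1 * \<epsilon>" for n
      proof -
        have "z n = (\<phi> n - L * e_p h (pfun p0 p1) n) - (\<phi> n - y n)"
          using sol_form[OF hpos ys, of n] by (simp add: z_def algebra_simps)
        then have "cmod (z n) \<le> cmod (\<phi> n - L * e_p h (pfun p0 p1) n) + cmod (\<phi> n - y n)"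
          using norm_triangle_ineq4[of "\<phi> n - L * e_p h (pfun p0 p1) n" "\<phi> n - y n"] by simp
        then show ?thesis using Lb[of n] yb[rule_format, of n] by linarith
      qed
      then have "z 0 = 0" using sol_bounded_zero[OF hpos zs _ P] by blast
      then have "y 0 = L" by (simp add: z_def E_0)
      show ?thesis
      proof (rule ext)
        fix n
        show "y n = L * e_p h (pfun p0 p1) n"
          by (subst sol_form[OF hpos ys, of n]) (simp add: \<open>y 0 = L\<close>)
      qed
    qed
    have mu: "min_ulam_constant h (pfun p0 p1) K1"
      unfolding min_ulam_constant_def K1_def
      using is_ulam[OF hpos Apos Bpos P] not_ulam[OF hpos Apos Bpos P] by blast
    show "let K1 = h * max ((1 + cmod (1 + complex_of_real h * p0)) / (-1 + cmod (1 + complex_of_real h * p0) * cmod (1 + complex_of_real h * p1)))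
                         ((1 + cmod (1 + complex_of_real h * p1)) / (-1 + cmod (1 + complex_of_real h * p0) * cmod (1 + complex_of_real h * p1)))
        in (\<exists>L. (\<lambda>n. \<phi> n / e_p h (pfun p0 p1) n) \<longlonglongrightarrow> L \<and>
              is_solution h (pfun p0 p1) (\<lambda>n. L * e_p h (pfun p0 p1) n) \<and>
              (\<forall>n. cmod (\<phi> n - L * e_p h (pfun p0 p1) n) \<le> K1 * \<epsilon>) \<and>
              (\<forall>y. is_solution h (pfun p0 p1) y \<and> (\<forall>n. cmod (\<phi> n - y n) \<le> K1 * \<epsilon>)
                     \<longrightarrow> y = (\<lambda>n. L * e_p h (pfun p0 p1) n))) \<and>
           min_ulam_constant h (pfun p0 p1) K1"
      unfolding Let_def Sf1 Sf0 K1_def[symmetric]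
      using uL sol_L[OF hpos] Lb uniq mu by blast
  next
    assume P: "cmod (1 + complex_of_real h * p0) * cmod (1 + complex_of_real h * p1) < 1"
    show "\<forall>x. is_solution h (pfun p0 p1) x \<and>
            cmod (\<phi> 0 - x 0) < \<epsilon> * h * ((1 + cmod (1 + complex_of_real h * p1)) / (1 - cmod (1 + complex_of_real h * p0) * cmod (1 + complex_of_real h * p1)))
         \<longrightarrow> (\<forall>n. cmod (\<phi> n - x n) < \<epsilon> * h *
                 max ((1 + cmod (1 + complex_of_real h * p0)) / (1 - cmod (1 + complex_of_real h * p0) * cmod (1 + complex_of_real h * p1)))
                     ((1 + cmod (1 + complex_of_real h * p1)) / (1 - cmod (1 + complex_of_real h * p0) * cmod (1 + complex_of_real h * p1))))"
    proof (intro allI impI, elim conjE)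
      fix x n
      assume xs: "is_solution h (pfun p0 p1) x"
        and x0: "cmod (\<phi> 0 - x 0) < \<epsilon> * h * ((1 + cmod (1 + complex_of_real h * p1)) / (1 - cmod (1 + complex_of_real h * p0) * cmod (1 + complex_of_real h * p1)))"
      have eh: "\<epsilon> * h = h * \<epsilon>" by simp
      have "cmod (\<phi> n - x n) < (if even n then h * \<epsilon> * ((1 + cmod (1 + complex_of_real h * p1)) /
                  (1 - cmod (1 + complex_of_real h * p0) * cmod (1 + complex_of_real h * p1)))
              else h * \<epsilon> * ((1 + cmod (1 + complex_of_real h * p0)) /
                  (1 - cmod (1 + complex_of_real h * p0) * cmod (1 + complex_of_real h * p1))))"
        using part2_core[OF hpos Apos Bpos P psi xs] x0 unfolding eh by blast
      moreover have "h * \<epsilon> > 0" using hpos eps by simp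
      ultimately show "cmod (\<phi> n - x n) < \<epsilon> * h *
                 max ((1 + cmod (1 + complex_of_real h * p0)) / (1 - cmod (1 + complex_of_real h * p0) * cmod (1 + complex_of_real h * p1)))
                     ((1 + cmod (1 + complex_of_real h * p1)) / (1 - cmod (1 + complex_of_real h * p0) * cmod (1 + complex_of_real h * p1)))"
        unfolding eh by (cases "even n") (auto simp: max_mult_distrib_left intro: less_le_trans)
    qed
  qed
qed

end
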